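(* In the continuous Donation Game, let $0\le\gamma\le b(K)-c(K)$, suppose $\lambda\ge c(K)/b(K)$, and let $p_0\in[0,1]$ satisfy $$\frac{\gamma-\lambda b(K)+c(K)}{(1-\lambda)b(K)}\le p_0\le\frac{\gamma}{(1-\lambda)b(K)}.$$ Define, for $x\in\{0,K\}$ and $y\in[0,K]$, $p(x,y)=\frac{1}{\lambda}\left(\frac{c(y)+\gamma}{b(K)}-(1-\lambda)p_0\right)$. Then $p(x,y)\in[0,1]$, and the memory-one strategy for $X$ with $\sigma_X^0=(1-p_0)\delta_0+p_0\delta_K$ and $\sigma_X[x,y]=(1-p(x,y))\delta_0+p(x,y)\delta_K$ enforces $\pi_Y=\gamma$ against every behavioral strategy of $Y$.
   Context: Continuous Donation Game: fix $K>0$ and measurable nondecreasing functions $b,c:[0,K]\to\mathbb{R}$ with $b(0)=c(0)=0$ and $b(s)>c(s)$ for $s>0$. Action spaces $S_X=S_Y=[0,K]$, payoffs $u_X(x,y)=b(y)-c(x)$, $u_Y(x,y)=b(x)-c(y)$, discount factor $\lambda\in(0,1)$. Repeated-game framework: histories $\mathcal{H}=\bigsqcup_T(S_X\times S_Y)^T$; a behavioral strategy is a Markov kernel from histories to the player's action space; a memory-one strategy for $X$ consists of an initial probability measure $\sigma_X^0$ and a Markov kernel $\sigma_X[x,y]$ applied to the previous action pair. The strategies generate, via $\mu_0=\sigma_X[\varnothing]\otimes\sigma_Y[\varnothing]$ and $\mu_t(E'\times E)=\int_{E'}(\sigma_X[h]\otimes\sigma_Y[h])(E)\,d\mu_{t-1}(h)$,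 the laws $\nu_t(E)=\mu_t(\mathcal{H}^t\times E)$ of the action pair at time $t$, and $\pi_X=(1-\lambda)\sum_t\lambda^t\int u_X\,d\nu_t$, $\pi_Y=(1-\lambda)\sum_t\lambda^t\int u_Y\,d\nu_t$. $\delta_s$ is the Dirac measure at $s$. *)

theory Defs
  imports "HOL-Probability.Probability"
begin

definition actS :: "real \<Rightarrow> real measure" where
  "actS K = restrict_space borel {0..K}"

definition pairS :: "real \<Rightarrow> (real \<times> real) measure" where
  "pairS K = actS K \<Otimes>\<^sub>M actS K"

text \<open>Histories of length T: (S_X x S_Y)^T, indices 0..T-1.  The full history space is the
  disjoint union over T, so a Markov kernel on it is the same as a family of Markov kernels
  indexed by the length T.\<close>
definition histS :: "real \<Rightarrow> nat \<Rightarrow> (nat \<Rightarrow> real \<times> real) measure" where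
  "histS K T = PiM {..<T} (\<lambda>_. pairS K)"

definition behavioral :: "real \<Rightarrow> (nat \<Rightarrow> (nat \<Rightarrow> real \<times> real) \<Rightarrow> real measure) \<Rightarrow> bool" where
  "behavioral K \<sigma> \<longleftrightarrow> (\<forall>T. \<sigma> T \<in> histS K T \<rightarrow>\<^sub>M prob_algebra (actS K))"

definition memory_one :: "real measure \<Rightarrow> (real \<Rightarrow> real \<Rightarrow> real measure)
    \<Rightarrow> nat \<Rightarrow> (nat \<Rightarrow> real \<times> real) \<Rightarrow> real measure" where
  "memory_one \<sigma>0 \<sigma> T h = (if T = 0 then \<sigma>0 else \<sigma> (fst (h (T - 1))) (snd (h (T - 1))))"

text \<open>Law of the history of length T generated by the two strategies
  (hist_law ... (Suc t) is the measure mu_t of the paper).\<close>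
primrec hist_law :: "real \<Rightarrow> (nat \<Rightarrow> (nat \<Rightarrow> real \<times> real) \<Rightarrow> real measure)
    \<Rightarrow> (nat \<Rightarrow> (nat \<Rightarrow> real \<times> real) \<Rightarrow> real measure) \<Rightarrow> nat \<Rightarrow> (nat \<Rightarrow> real \<times> real) measure" where
  "hist_law K \<sigma>X \<sigma>Y 0 = return (histS K 0) (\<lambda>_. undefined)"
| "hist_law K \<sigma>X \<sigma>Y (Suc t) =
     hist_law K \<sigma>X \<sigma>Y t \<bind>
       (\<lambda>h. distr (\<sigma>X t h \<Otimes>\<^sub>M \<sigma>Y t h) (histS K (Suc t)) (\<lambda>a. h(t := a)))"

definition action_law :: "real \<Rightarrow> (nat \<Rightarrow> (nat \<Rightarrow> real \<times> real) \<Rightarrow> real measure)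
    \<Rightarrow> (nat \<Rightarrow> (nat \<Rightarrow> real \<times> real) \<Rightarrow> real measure) \<Rightarrow> nat \<Rightarrow> (real \<times> real) measure" where
  "action_law K \<sigma>X \<sigma>Y t = distr (hist_law K \<sigma>X \<sigma>Y (Suc t)) (pairS K) (\<lambda>h. h t)"

definition disc_payoff :: "real \<Rightarrow> real \<Rightarrow> (real \<times> real \<Rightarrow> real)
    \<Rightarrow> (nat \<Rightarrow> (nat \<Rightarrow> real \<times> real) \<Rightarrow> real measure)
    \<Rightarrow> (nat \<Rightarrow> (nat \<Rightarrow> real \<times> real) \<Rightarrow> real measure) \<Rightarrow> real" where
  "disc_payoff K dsc u \<sigma>X \<sigma>Y =
     (1 - dsc) * (\<Sum>t. dsc ^ t * (\<integral>z. u z \<partial>action_law K \<sigma>X \<sigma>Y t))"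

definition uX :: "(real \<Rightarrow> real) \<Rightarrow> (real \<Rightarrow> real) \<Rightarrow> real \<times> real \<Rightarrow> real" where
  "uX b c z = b (snd z) - c (fst z)"

definition uY :: "(real \<Rightarrow> real) \<Rightarrow> (real \<Rightarrow> real) \<Rightarrow> real \<times> real \<Rightarrow> real" where
  "uY b c z = b (fst z) - c (snd z)"

definition two_point :: "real \<Rightarrow> real \<Rightarrow> real measure" where
  "two_point K q = distr (measure_pmf (bernoulli_pmf q)) (actS K) (\<lambda>\<beta>. if \<beta> then K else 0)"

end

theory Submission
  imports Defs
begin


lemma space_actS: "space (actS K) = {0..K}"
  by (simp add: actS_def space_restrict_space)

lemma space_pairS: "space (pairS K) = {0..K} \<times> {0..K}"
  by (simp add: pairS_def space_pair_measure space_actS)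

lemma histS_Suc: "histS K (Suc t) = PiM (insert t {..<t}) (\<lambda>_. pairS K)"
  by (simp add: histS_def lessThan_Suc)

lemma step_meas:
  assumes X: "\<sigma>X \<in> histS K t \<rightarrow>\<^sub>M prob_algebra (actS K)"
    and Y: "\<sigma>Y \<in> histS K t \<rightarrow>\<^sub>M prob_algebra (actS K)"
  shows "(\<lambda>h. distr (\<sigma>X h \<Otimes>\<^sub>M \<sigma>Y h) (histS K (Suc t)) (\<lambda>a. h(t := a)))
           \<in> histS K t \<rightarrow>\<^sub>M prob_algebra (histS K (Suc t))"
proof (rule measurable_distr_prob_space2[where M="pairS K"])
  show "(\<lambda>h. \<sigma>X h \<Otimes>\<^sub>M \<sigma>Y h) \<in> histS K t \<rightarrow>\<^sub>M prob_algebra (pairS K)"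
    unfolding pairS_def by (rule measurable_pair_prob[OF X Y])
  show "(\<lambda>(h, a). h(t := a)) \<in> histS K t \<Otimes>\<^sub>M pairS K \<rightarrow>\<^sub>M histS K (Suc t)"
    unfolding histS_Suc unfolding histS_def
    using measurable_add_dim[of t "{..<t}" "\<lambda>_. pairS K"] by simp
qed

lemma hist_law_prob:
  assumes X: "behavioral K \<sigma>X" and Y: "behavioral K \<sigma>Y"
  shows "hist_law K \<sigma>X \<sigma>Y t \<in> space (prob_algebra (histS K t))"
proof (induction t)
  case 0
  have "(\<lambda>_. undefined) \<in> space (histS K 0)"
    by (simp add: histS_def space_PiM)
  then show ?case
    using measurable_space[OF measurable_return_prob_space] by simp
next
  case (Suc t)
  have k: "(\<lambda>h. distr (\<sigma>X t h \<Otimes>\<^sub>M \<sigma>Y t h) (histS K (Suc t)) (\<lambda>a. h(t := a)))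
           \<in> histS K t \<rightarrow>\<^sub>M prob_algebra (histS K (Suc t))"
    using X Y by (intro step_meas) (auto simp: behavioral_def)
  show ?case
    using prob_space_bind'[OF Suc k] sets_bind'[OF Suc k]
    by (simp add: space_prob_algebra)
qed




lemma integral_step:
  fixes f :: "real \<times> real \<Rightarrow> real"
  assumes X: "behavioral K \<sigma>X" and Y: "behavioral K \<sigma>Y"
    and f: "f \<in> borel_measurable (pairS K)"
    and fb: "\<And>z. z \<in> space (pairS K) \<Longrightarrow> \<bar>f z\<bar> \<le> B"
  shows "(\<integral>h. f (h t) \<partial>hist_law K \<sigma>X \<sigma>Y (Suc t))
       = (\<integral>h. (\<integral>a. f a \<partial>(\<sigma>X t h \<Otimes>\<^sub>M \<sigma>Y t h)) \<partial>hist_law K \<sigma>X \<sigma>Y t)"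
proof -
  let ?k = "\<lambda>h. distr (\<sigma>X t h \<Otimes>\<^sub>M \<sigma>Y t h) (histS K (Suc t)) (\<lambda>a. h(t := a))"
  have Xt: "\<sigma>X t \<in> histS K t \<rightarrow>\<^sub>M prob_algebra (actS K)"
    and Yt: "\<sigma>Y t \<in> histS K t \<rightarrow>\<^sub>M prob_algebra (actS K)"
    using X Y by (auto simp: behavioral_def)
  have k: "?k \<in> histS K t \<rightarrow>\<^sub>M prob_algebra (histS K (Suc t))"
    by (rule step_meas[OF Xt Yt])
  have HL: "hist_law K \<sigma>X \<sigma>Y t \<in> space (prob_algebra (histS K t))"
    by (rule hist_law_prob[OF X Y])
  then have sHL: "sets (hist_law K \<sigma>X \<sigma>Y t) = sets (histS K t)"
    and pHL: "prob_space (hist_law K \<sigma>X \<sigma>Y t)"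
    by (auto simp: space_prob_algebra)
  have k': "?k \<in> hist_law K \<sigma>X \<sigma>Y t \<rightarrow>\<^sub>M subprob_algebra (histS K (Suc t))"
    using measurable_prob_algebraD[OF k] measurable_cong_sets[OF sHL refl, of "subprob_algebra (histS K (Suc t))"] by simp
  have comp: "(\<lambda>h. h t) \<in> histS K (Suc t) \<rightarrow>\<^sub>M pairS K"
    unfolding histS_def by (rule measurable_component_singleton) simp
  have fm: "(\<lambda>h. f (h t)) \<in> borel_measurable (histS K (Suc t))"
    using measurable_compose[OF comp f] .
  have fbd: "\<And>h. h \<in> space (histS K (Suc t)) \<Longrightarrow> \<bar>f (h t)\<bar> \<le> B"
    using fb measurable_space[OF comp] by blast
  have "(\<integral>h. f (h t) \<partial>hist_law K \<sigma>X \<sigma>Y (Suc t)) = (\<integral>h. (\<integral>g. f (g t) \<partial>?k h) \<partial>hist_law K \<sigma>X \<sigma>Y t)"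
    unfolding hist_law.simps
  proof (rule integral_bind[where K="histS K (Suc t)" and B=B and B'=1])
    show "(\<lambda>h. f (h t)) \<in> borel_measurable (histS K (Suc t))" by (rule fm)
    show "\<And>h. h \<in> space (histS K (Suc t)) \<Longrightarrow> \<bar>f (h t)\<bar> \<le> B" by (rule fbd)
    show "?k \<in> hist_law K \<sigma>X \<sigma>Y t \<rightarrow>\<^sub>M subprob_algebra (histS K (Suc t))" by (rule k')
    show "finite_measure (hist_law K \<sigma>X \<sigma>Y t)"
      using pHL by (simp add: prob_space.finite_measure)
    show "AE x in hist_law K \<sigma>X \<sigma>Y t. emeasure (?k x) (space (?k x)) \<le> ennreal 1"
    proof (rule AE_I2)
      fix h assume "h \<in> space (hist_law K \<sigma>X \<sigma>Y t)"
      then have "h \<in> space (histS K t)" using sets_eq_imp_space_eq[OF sHL] by simp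
      then have "?k h \<in> space (prob_algebra (histS K (Suc t)))"
        using measurable_space[OF k] by blast
      then have "prob_space (?k h)" by (simp add: space_prob_algebra)
      then show "emeasure (?k h) (space (?k h)) \<le> ennreal 1"
        using prob_space.emeasure_space_1 by fastforce
    qed
  qed
  also have "\<dots> = (\<integral>h. (\<integral>a. f a \<partial>(\<sigma>X t h \<Otimes>\<^sub>M \<sigma>Y t h)) \<partial>hist_law K \<sigma>X \<sigma>Y t)"
  proof (rule Bochner_Integration.integral_cong[OF refl])
    fix h assume "h \<in> space (hist_law K \<sigma>X \<sigma>Y t)"
    then have h: "h \<in> space (histS K t)" using sets_eq_imp_space_eq[OF sHL] by simp
    have sP: "sets (\<sigma>X t h \<Otimes>\<^sub>M \<sigma>Y t h) = sets (pairS K)"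
      unfolding pairS_def
      using measurable_space[OF Xt h] measurable_space[OF Yt h]
      by (intro sets_pair_measure_cong) (auto simp: space_prob_algebra)
    have upd: "(\<lambda>a. h(t := a)) \<in> pairS K \<rightarrow>\<^sub>M histS K (Suc t)"
      unfolding histS_Suc using h unfolding histS_def
      by (intro measurable_component_update) auto
    have upd': "(\<lambda>a. h(t := a)) \<in> (\<sigma>X t h \<Otimes>\<^sub>M \<sigma>Y t h) \<rightarrow>\<^sub>M histS K (Suc t)"
      using upd measurable_cong_sets[OF sP refl, of "histS K (Suc t)"] by simp
    show "(\<integral>g. f (g t) \<partial>?k h) = (\<integral>a. f a \<partial>(\<sigma>X t h \<Otimes>\<^sub>M \<sigma>Y t h))"
      by (subst integral_distr[OF upd' fm]) simp
  qed
  finally show ?thesis .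
qed




lemma integral_pair_fst:
  fixes g :: "real \<Rightarrow> real"
  assumes "prob_space M" and g: "g \<in> borel_measurable N"
  shows "(\<integral>a. g (fst a) \<partial>(N \<Otimes>\<^sub>M M)) = (\<integral>x. g x \<partial>N)"
proof -
  have "(\<integral>x. g x \<partial>N) = (\<integral>x. g x \<partial>distr (N \<Otimes>\<^sub>M M) N fst)"
    using prob_space.distr_pair_fst[OF assms(1), of N] by simp
  also have "\<dots> = (\<integral>a. g (fst a) \<partial>(N \<Otimes>\<^sub>M M))"
    by (rule integral_distr[OF measurable_fst g])
  finally show ?thesis by simp
qed

lemma tp_map_meas:
  assumes "K \<ge> 0"
  shows "(\<lambda>\<beta>. if \<beta> then K else 0) \<in> measure_pmf P \<rightarrow>\<^sub>M actS K"
  using assms by (simp add: measurable_pmf_measure1 space_actS)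

lemma tp_space:
  assumes "K \<ge> 0"
  shows "two_point K q \<in> space (prob_algebra (actS K))"
  unfolding two_point_def space_prob_algebra
  using tp_map_meas[OF assms]
  by (auto intro!: prob_space.prob_space_distr prob_space_measure_pmf)

lemma tp_integral:
  fixes g :: "real \<Rightarrow> real"
  assumes "K \<ge> 0" "0 \<le> q" "q \<le> 1" and g: "g \<in> borel_measurable (actS K)"
  shows "(\<integral>x. g x \<partial>two_point K q) = g K * q + g 0 * (1 - q)"
  unfolding two_point_def
  by (subst integral_distr[OF tp_map_meas[OF assms(1)] g]) (simp add: assms)

lemma tp_emeasure:
  assumes "K \<ge> 0" "0 \<le> q" "q \<le> 1" and A: "A \<in> sets (actS K)"
  shows "emeasure (two_point K q) A = indicator A K * ennreal q + indicator A 0 * ennreal (1 - q)"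
proof -
  have "emeasure (two_point K q) A
      = emeasure (measure_pmf (bernoulli_pmf q)) ((\<lambda>\<beta>. if \<beta> then K else 0) -` A)"
    unfolding two_point_def
    by (subst emeasure_distr[OF tp_map_meas[OF assms(1)] A]) simp
  also have "\<dots> = (\<integral>\<^sup>+\<beta>. indicator ((\<lambda>\<beta>. if \<beta> then K else 0) -` A) \<beta> \<partial>measure_pmf (bernoulli_pmf q))"
    by (subst nn_integral_indicator) auto
  also have "\<dots> = indicator A K * ennreal q + indicator A 0 * ennreal (1 - q)"
    using assms by (subst nn_integral_bernoulli_pmf) (auto simp: indicator_def)
  finally show ?thesis .
qed

lemma tp_meas:
  assumes K: "K \<ge> 0" and q: "q \<in> borel_measurable M"
    and qr: "\<And>x. x \<in> space M \<Longrightarrow> 0 \<le> q x \<and> q x \<le> 1"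
  shows "(\<lambda>x. two_point K (q x)) \<in> M \<rightarrow>\<^sub>M prob_algebra (actS K)"
proof (rule measurable_prob_algebraI)
  fix x assume "x \<in> space M"
  show "prob_space (two_point K (q x))"
    using tp_space[OF K] by (simp add: space_prob_algebra)
next
  show "(\<lambda>x. two_point K (q x)) \<in> M \<rightarrow>\<^sub>M subprob_algebra (actS K)"
  proof (rule measurable_subprob_algebra)
    fix x assume "x \<in> space M"
    show "subprob_space (two_point K (q x))"
      using tp_space[OF K] by (simp add: space_prob_algebra prob_space_imp_subprob_space)
    show "sets (two_point K (q x)) = sets (actS K)"
      using tp_space[OF K] by (simp add: space_prob_algebra)
  next
    fix A assume A: "A \<in> sets (actS K)"
    have "(\<lambda>x. indicator A K * ennreal (q x) + indicator A 0 * ennreal (1 - q x)) \<in> borel_measurable M"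
      using q by measurable
    then show "(\<lambda>x. emeasure (two_point K (q x)) A) \<in> borel_measurable M"
      by (rule measurable_cong[THEN iffD1, rotated])
         (simp add: tp_emeasure[OF K _ _ A] qr)
  qed
qed




lemma comp_meas: "(\<lambda>h. h t) \<in> histS K (Suc t) \<rightarrow>\<^sub>M pairS K"
  unfolding histS_def by (rule measurable_component_singleton) simp

lemma AL_space:
  assumes X: "behavioral K \<sigma>X" and Y: "behavioral K \<sigma>Y"
  shows "action_law K \<sigma>X \<sigma>Y t \<in> space (prob_algebra (pairS K))"
proof -
  have H: "hist_law K \<sigma>X \<sigma>Y (Suc t) \<in> space (prob_algebra (histS K (Suc t)))"
    by (rule hist_law_prob[OF X Y])
  then have s: "sets (hist_law K \<sigma>X \<sigma>Y (Suc t)) = sets (histS K (Suc t))"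
    and p: "prob_space (hist_law K \<sigma>X \<sigma>Y (Suc t))" by (auto simp: space_prob_algebra)
  have c: "(\<lambda>h. h t) \<in> hist_law K \<sigma>X \<sigma>Y (Suc t) \<rightarrow>\<^sub>M pairS K"
    using comp_meas measurable_cong_sets[OF s refl, of "pairS K"] by simp
  show ?thesis unfolding action_law_def space_prob_algebra
    using prob_space.prob_space_distr[OF p c] by simp
qed

lemma AL_integral:
  fixes f :: "real \<times> real \<Rightarrow> real"
  assumes X: "behavioral K \<sigma>X" and Y: "behavioral K \<sigma>Y"
    and f: "f \<in> borel_measurable (pairS K)"
  shows "(\<integral>z. f z \<partial>action_law K \<sigma>X \<sigma>Y t) = (\<integral>h. f (h t) \<partial>hist_law K \<sigma>X \<sigma>Y (Suc t))"
proof -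
  have H: "hist_law K \<sigma>X \<sigma>Y (Suc t) \<in> space (prob_algebra (histS K (Suc t)))"
    by (rule hist_law_prob[OF X Y])
  then have s: "sets (hist_law K \<sigma>X \<sigma>Y (Suc t)) = sets (histS K (Suc t))"
    by (auto simp: space_prob_algebra)
  have c: "(\<lambda>h. h t) \<in> hist_law K \<sigma>X \<sigma>Y (Suc t) \<rightarrow>\<^sub>M pairS K"
    using comp_meas measurable_cong_sets[OF s refl, of "pairS K"] by simp
  show ?thesis unfolding action_law_def by (rule integral_distr[OF c f])
qed

lemma bounded_int:
  fixes f :: "'a \<Rightarrow> real"
  assumes M: "M \<in> space (prob_algebra N)" and f: "f \<in> borel_measurable N"
    and fb: "\<And>z. z \<in> space N \<Longrightarrow> lo \<le> f z \<and> f z \<le> hi"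
  shows "integrable M f" "lo \<le> (\<integral>z. f z \<partial>M)" "(\<integral>z. f z \<partial>M) \<le> hi"
proof -
  have s: "sets M = sets N" and p: "prob_space M" using M by (auto simp: space_prob_algebra)
  have sp: "space M = space N" using sets_eq_imp_space_eq[OF s] .
  have fm: "f \<in> borel_measurable M" by (subst measurable_cong_sets[OF s refl]) (rule f)
  show i: "integrable M f"
  proof (rule finite_measure.integrable_const_bound[where B="\<bar>lo\<bar> + \<bar>hi\<bar>"])
    show "finite_measure M" using p by (simp add: prob_space.finite_measure)
    show "AE x in M. norm (f x) \<le> \<bar>lo\<bar> + \<bar>hi\<bar>"
      using fb by (intro AE_I2) (force simp: sp)
  qed (rule fm)
  have ic: "\<And>a::real. integrable M (\<lambda>_. a)"
    using p by (simp add: prob_space.finite_measure finite_measure.integrable_const)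
  have "(\<integral>z. lo \<partial>M) \<le> (\<integral>z. f z \<partial>M)"
    by (rule integral_mono[OF ic i]) (use fb sp in auto)
  then show "lo \<le> (\<integral>z. f z \<partial>M)" using p by (simp add: prob_space.prob_space)
  have "(\<integral>z. f z \<partial>M) \<le> (\<integral>z. hi \<partial>M)"
    by (rule integral_mono[OF i ic]) (use fb sp in auto)
  then show "(\<integral>z. f z \<partial>M) \<le> hi" using p by (simp add: prob_space.prob_space)
qed

lemma inner_fst:
  fixes g :: "real \<Rightarrow> real"
  assumes N: "N \<in> space (prob_algebra (actS K))" and M: "M \<in> space (prob_algebra (actS K))"
    and g: "g \<in> borel_measurable (actS K)"
  shows "(\<integral>a. g (fst a) \<partial>(N \<Otimes>\<^sub>M M)) = (\<integral>x. g x \<partial>N)"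
proof -
  have s: "sets N = sets (actS K)" using N by (auto simp: space_prob_algebra)
  have p: "prob_space M" using M by (auto simp: space_prob_algebra)
  show ?thesis
    by (rule integral_pair_fst[OF p]) (subst measurable_cong_sets[OF s refl], rule g)
qed




theorem mainTheorem10:
  fixes K \<delta> \<gamma> p0 :: real and b c :: "real \<Rightarrow> real"
    and p :: "real \<Rightarrow> real \<Rightarrow> real"
  assumes K_pos: "K > 0"
    and b_meas: "b \<in> borel_measurable (actS K)"
    and c_meas: "c \<in> borel_measurable (actS K)"
    and b_mono: "mono_on {0..K} b"
    and c_mono: "mono_on {0..K} c"
    and b0: "b 0 = 0" and c0: "c 0 = 0"
    and bc: "\<forall>s\<in>{0<..K}. b s > c s"
    and lam: "0 < \<delta>" "\<delta> < 1"
    and gam: "0 \<le> \<gamma>" "\<gamma> \<le> b K - c K"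
    and lam_ge: "\<delta> \<ge> c K / b K"
    and p0: "0 \<le> p0" "p0 \<le> 1"
    and p0_lo: "(\<gamma> - \<delta> * b K + c K) / ((1 - \<delta>) * b K) \<le> p0"
    and p0_hi: "p0 \<le> \<gamma> / ((1 - \<delta>) * b K)"
    and p_def: "p = (\<lambda>x y. (1 / \<delta>) * ((c y + \<gamma>) / b K - (1 - \<delta>) * p0))"
  shows "(\<forall>x\<in>{0, K}. \<forall>y\<in>{0..K}. 0 \<le> p x y \<and> p x y \<le> 1) \<and>
         (\<forall>\<sigma>Y. behavioral K \<sigma>Y \<longrightarrow>
            disc_payoff K \<delta> (uY b c)
              (memory_one (two_point K p0) (\<lambda>x y. two_point K (p x y))) \<sigma>Y = \<gamma>)"
proof -
  have K0: "K \<ge> 0" using K_pos by simp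
  have bnd_b: "0 \<le> b y \<and> b y \<le> b K" if "y \<in> {0..K}" for y
    using that b_mono b0 K0 unfolding mono_on_def by (metis atLeastAtMost_iff order_refl)
  have bnd_c: "0 \<le> c y \<and> c y \<le> c K" if "y \<in> {0..K}" for y
    using that c_mono c0 K0 unfolding mono_on_def by (metis atLeastAtMost_iff order_refl)
  have cK0: "0 \<le> c K" using bnd_c[of K] K0 by simp
  have bKc: "c K < b K" using bc K_pos by auto
  have bK: "b K > 0" using cK0 bKc by simp
  have d1: "(1 - \<delta>) * b K > 0" using lam bK by simp
  have hi': "(1 - \<delta>) * p0 \<le> \<gamma> / b K"
    using p0_hi d1 bK by (simp add: field_simps)
  have lo': "(c K + \<gamma>) / b K \<le> \<delta> + (1 - \<delta>) * p0"
    using p0_lo d1 bK by (simp add: field_simps)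
  have prange: "0 \<le> p x y \<and> p x y \<le> 1" if "y \<in> {0..K}" for x y
  proof -
    have "c y / b K \<ge> 0" "c y / b K \<le> c K / b K"
      using bnd_c[OF that] bK by (auto simp: divide_right_mono)
    then have "(c y + \<gamma>) / b K \<ge> \<gamma> / b K" "(c y + \<gamma>) / b K \<le> (c K + \<gamma>) / b K"
      by (simp_all add: add_divide_distrib)
    then have "0 \<le> (c y + \<gamma>) / b K - (1 - \<delta>) * p0"
      "(c y + \<gamma>) / b K - (1 - \<delta>) * p0 \<le> \<delta>"
      using hi' lo' by linarith+
    then show ?thesis using lam unfolding p_def by (simp add: field_simps)
  qed
  have part1: "\<forall>x\<in>{0, K}. \<forall>y\<in>{0..K}. 0 \<le> p x y \<and> p x y \<le> 1"
    using prange by blast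
  define q where "q = (\<lambda>z::real\<times>real. p (fst z) (snd z))"
  have csnd: "(\<lambda>z. c (snd z)) \<in> borel_measurable (pairS K)"
    unfolding pairS_def by (rule measurable_compose[OF measurable_snd c_meas])
  have bfst: "(\<lambda>z. b (fst z)) \<in> borel_measurable (pairS K)"
    unfolding pairS_def by (rule measurable_compose[OF measurable_fst b_meas])
  have q_meas: "q \<in> borel_measurable (pairS K)"
    unfolding q_def p_def using csnd by measurable
  have qr: "0 \<le> q z \<and> q z \<le> 1" if "z \<in> space (pairS K)" for z
    using that prange unfolding q_def space_pairS by auto
  define \<sigma>X where "\<sigma>X = memory_one (two_point K p0) (\<lambda>x y. two_point K (p x y))"
  have \<sigma>X0: "\<sigma>X 0 h = two_point K p0" for h
    unfolding \<sigma>X_def memory_one_def by simp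
  have \<sigma>XS: "\<sigma>X (Suc s) h = two_point K (q (h s))" for s h
    unfolding \<sigma>X_def memory_one_def q_def by simp
  have X: "behavioral K \<sigma>X"
    unfolding behavioral_def
  proof
    fix T show "\<sigma>X T \<in> histS K T \<rightarrow>\<^sub>M prob_algebra (actS K)"
    proof (cases T)
      case 0
      then show ?thesis
        using measurable_const[OF tp_space[OF K0]] by (simp add: \<sigma>X0[abs_def])
    next
      case (Suc s)
      have "(\<lambda>h. two_point K (q (h s))) \<in> histS K T \<rightarrow>\<^sub>M prob_algebra (actS K)"
        unfolding Suc
        by (rule measurable_compose[OF comp_meas tp_meas[OF K0 q_meas qr]])
      then show ?thesis using Suc by (simp add: \<sigma>XS[abs_def])
    qed
  qed
  have part2: "disc_payoff K \<delta> (uY b c) \<sigma>X \<sigma>Y = \<gamma>" if Y: "behavioral K \<sigma>Y" for \<sigma>Y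
  proof -
    let ?HL = "hist_law K \<sigma>X \<sigma>Y" and ?AL = "action_law K \<sigma>X \<sigma>Y"
    define A where "A t = (\<integral>z. b (fst z) \<partial>?AL t)" for t
    define C where "C t = (\<integral>z. c (snd z) \<partial>?AL t)" for t
    define D where "D = \<gamma> - (1 - \<delta>) * p0 * b K"
    have ALs: "?AL t \<in> space (prob_algebra (pairS K))" for t by (rule AL_space[OF X Y])
    have HLs: "?HL t \<in> space (prob_algebra (histS K t))" for t by (rule hist_law_prob[OF X Y])
    have HLsp: "space (?HL t) = space (histS K t)" for t
      using HLs[of t] by (intro sets_eq_imp_space_eq) (simp add: space_prob_algebra)
    have HLp: "prob_space (?HL t)" for t using HLs[of t] by (auto simp: space_prob_algebra)
    have bfb: "0 \<le> b (fst z) \<and> b (fst z) \<le> b K" if "z \<in> space (pairS K)" for z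
      using that bnd_b by (auto simp: space_pairS)
    have cfb: "0 \<le> c (snd z) \<and> c (snd z) \<le> c K" if "z \<in> space (pairS K)" for z
      using that bnd_c by (auto simp: space_pairS)
    have bI: "integrable (?AL t) (\<lambda>z. b (fst z))" "0 \<le> (\<integral>z. b (fst z) \<partial>?AL t)"
      "(\<integral>z. b (fst z) \<partial>?AL t) \<le> b K" for t
      using bounded_int[OF ALs bfst, of 0 "b K"] bfb by blast+
    have cI: "integrable (?AL t) (\<lambda>z. c (snd z))" for t
      using bounded_int[OF ALs csnd, of 0 "c K"] cfb by blast
    have Abnd: "0 \<le> A t \<and> A t \<le> b K" for t using bI(2,3) unfolding A_def by auto
    have uYint: "(\<integral>z. uY b c z \<partial>?AL t) = A t - C t" for t
      unfolding uY_def A_def C_def by (rule Bochner_Integration.integral_diff[OF bI(1) cI])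
    have Xt: "\<sigma>X t h \<in> space (prob_algebra (actS K))" if "h \<in> space (histS K t)" for t h
      using measurable_space[of "\<sigma>X t" "histS K t" "prob_algebra (actS K)" h] X that
      unfolding behavioral_def by blast
    have Yt: "\<sigma>Y t h \<in> space (prob_algebra (actS K))" if "h \<in> space (histS K t)" for t h
      using measurable_space[of "\<sigma>Y t" "histS K t" "prob_algebra (actS K)" h] Y that
      unfolding behavioral_def by blast
    have bstep: "A t = (\<integral>h. (\<integral>x. b x \<partial>\<sigma>X t h) \<partial>?HL t)" for t
    proof -
      have "A t = (\<integral>h. b (fst (h t)) \<partial>?HL (Suc t))"
        unfolding A_def by (rule AL_integral[OF X Y bfst])
      also have "\<dots> = (\<integral>h. (\<integral>a. b (fst a) \<partial>(\<sigma>X t h \<Otimes>\<^sub>M \<sigma>Y t h)) \<partial>?HL t)"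
        by (rule integral_step[OF X Y bfst, where B="b K"]) (use bfb in auto)
      also have "\<dots> = (\<integral>h. (\<integral>x. b x \<partial>\<sigma>X t h) \<partial>?HL t)"
        by (rule Bochner_Integration.integral_cong[OF refl], rule inner_fst[OF Xt Yt b_meas])
           (simp_all add: HLsp)
      finally show ?thesis .
    qed
    have A0: "A 0 = b K * p0"
    proof -
      have "A 0 = (\<integral>h. b K * p0 \<partial>?HL 0)"
        unfolding bstep
        by (rule Bochner_Integration.integral_cong[OF refl])
           (simp add: \<sigma>X0 tp_integral[OF K0 p0 b_meas] b0)
      also have "\<dots> = b K * p0" using prob_space.prob_space[OF HLp[of 0]] by (simp del: hist_law.simps)
      finally show ?thesis .
    qed
    have AS: "\<delta> * A (Suc s) = C s + D" for s
    proof -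
      have bq: "(\<lambda>z. b K * q z) \<in> borel_measurable (pairS K)" using q_meas by measurable
      have "A (Suc s) = (\<integral>h. b K * q (h s) \<partial>?HL (Suc s))"
        unfolding bstep
      proof (rule Bochner_Integration.integral_cong[OF refl])
        fix h assume "h \<in> space (?HL (Suc s))"
        then have "h s \<in> space (pairS K)" using measurable_space[OF comp_meas] HLsp by blast
        then show "(\<integral>x. b x \<partial>\<sigma>X (Suc s) h) = b K * q (h s)"
          using qr by (simp add: \<sigma>XS tp_integral[OF K0 _ _ b_meas] b0)
      qed
      also have "\<dots> = (\<integral>z. b K * q z \<partial>?AL s)"
        by (rule AL_integral[OF X Y bq, symmetric])
      finally have "\<delta> * A (Suc s) = (\<integral>z. \<delta> * (b K * q z) \<partial>?AL s)" by simp
      also have "\<dots> = (\<integral>z. c (snd z) + D \<partial>?AL s)"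
      proof (rule Bochner_Integration.integral_cong[OF refl])
        fix z show "\<delta> * (b K * q z) = c (snd z) + D"
          unfolding q_def p_def D_def using lam bK by (simp add: field_simps)
      qed
      also have "\<dots> = C s + D"
      proof -
        have p: "prob_space (?AL s)" using ALs[of s] by (simp add: space_prob_algebra)
        have ic: "integrable (?AL s) (\<lambda>_. D)"
          using p by (simp add: prob_space.finite_measure finite_measure.integrable_const)
        show ?thesis unfolding C_def
          using Bochner_Integration.integral_add[OF cI ic] p by (simp add: prob_space.prob_space)
      qed
      finally show ?thesis .
    qed
    have termeq: "\<delta> ^ t * (A t - C t) = (\<delta> ^ t * A t - \<delta> ^ Suc t * A (Suc t)) + D * \<delta> ^ t" for t
    proof -
      have "\<delta> ^ Suc t * A (Suc t) = \<delta> ^ t * (C t + D)"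
        using AS[of t] by (simp add: mult.assoc)
      then show ?thesis by (simp add: algebra_simps)
    qed
    have lim: "(\<lambda>t. \<delta> ^ t * A t) \<longlonglongrightarrow> 0"
    proof (rule tendsto_sandwich[where f="\<lambda>_. 0" and h="\<lambda>t. \<delta> ^ t * b K"])
      show "\<forall>\<^sub>F n in sequentially. 0 \<le> \<delta> ^ n * A n" using Abnd lam by simp
      show "\<forall>\<^sub>F n in sequentially. \<delta> ^ n * A n \<le> \<delta> ^ n * b K"
        using Abnd lam by (simp add: mult_left_mono)
      show "(\<lambda>n. \<delta> ^ n * b K) \<longlonglongrightarrow> 0"
        using LIMSEQ_power_zero[of \<delta>] lam by (intro tendsto_mult_left_zero) simp
    qed simp
    have s1: "(\<lambda>t. \<delta> ^ t * A t - \<delta> ^ Suc t * A (Suc t)) sums (A 0 - 0)"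
      using telescope_sums'[OF lim] by simp
    have s2: "(\<lambda>t. D * \<delta> ^ t) sums (D * (1 / (1 - \<delta>)))"
      using sums_mult[OF geometric_sums[of \<delta>]] lam by simp
    have "(\<lambda>t. \<delta> ^ t * (\<integral>z. uY b c z \<partial>?AL t)) sums (A 0 - 0 + D * (1 / (1 - \<delta>)))"
      unfolding uYint termeq by (rule sums_add[OF s1 s2])
    then have "(\<Sum>t. \<delta> ^ t * (\<integral>z. uY b c z \<partial>?AL t)) = b K * p0 + D / (1 - \<delta>)"
      using A0 by (simp add: sums_iff)
    then show ?thesis
      unfolding disc_payoff_def D_def using lam by (simp add: field_simps)
  qed
  show ?thesis using part1 part2 unfolding \<sigma>X_def by blast
qed


end
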